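(* Let $\bar F^a,\bar F^b:\mathbb{R}^n\times(0,\infty)\to\mathbb{R}^n$ be closed-loop discrete-time models and suppose that $\bar F^a$ is EPC with $\bar F^b$. Then: (i) $\bar F^a$ is SPS-VSR if and only if $\bar F^b$ is SPS-VSR; (ii) $\bar F^a$ is LES-VSR if and only if $\bar F^b$ is LES-VSR; (iii) $\bar F^a$ is SLES-VSR if and only if $\bar F^b$ is SLES-VSR.
   Context: A closed-loop discrete-time (DT) model is a map $\bar F:\mathbb{R}^n\times(0,\infty)\to\mathbb{R}^n$; its solutions under a sampling-period sequence $\{T_i\}_{i=0}^\infty$ are given by $x_{k+1}=\bar F(x_k,T_k)$, $k\in\mathbb{N}_0$. For $T>0$, $\Phi(T)$ denotes the set of all sequences $\{T_i\}_{i=0}^\infty$ with $T_i\in(0,T)$ for all $i$; by convention $\sum_{i=0}^{-1}T_i=0$. $|\cdot|$ is the Euclidean norm. $\mathcal{K}$: continuous strictly increasing $\alpha:\mathbb{R}_{\ge0}\to\mathbb{R}_{\ge0}$ with $\alpha(0)=0$; $\mathcal{K}_\infty$: unbounded functions in $\mathcal{K}$; $\mathcal{KL}$: $\beta:\mathbb{R}_{\ge0}^2\to\mathbb{R}_{\ge0}$ with $\beta(\cdot,t)\in\mathcal{K}$ for each $t$ and $\beta(s,\cdot)$ strictly decreasing to $0$ for each $s$. EPC: $\bar F^a$ is Equilibrium-Preserving Consistent (EPC) with $\bar F^b$ if for each $M\ge0$ there exist $K=K(M)>0$, $T^*=T^*(M)>0$ and $\rho\in\mathcal{K}_\infty$ such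 that $|\bar F^a(x,T)-\bar F^b(y,T)|\le(1+KT)|x-y|+T\rho(T)\max\{|x|,|y|\}$ for all $|x|,|y|\le M$ and $T\in(0,T^* )$. SPS-VSR: there exists $\beta\in\mathcal{KL}$ such that for every $M\ge0$ and $R>0$ there exists $T^\star=T^\star(M,R)>0$ such that for all $k\in\mathbb{N}_0$, $\{T_i\}\in\Phi(T^\star)$ and $|x_0|\le M$, the solutions satisfy $|x_k|\le\beta(|x_0|,\sum_{i=0}^{k-1}T_i)+R$. LES-VSR: there exist $K\ge1$ and $R,T^\star,\lambda>0$ such that for all $k\in\mathbb{N}_0$, $\{T_i\}\in\Phi(T^\star)$ and $|x_0|\le R$, the solutions satisfy $|x_k|\le K|x_0|e^{-\lambda\sum_{i=0}^{k-1}T_i}$. SLES-VSR: both SPS-VSR and LES-VSR. *)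

theory Defs
  imports "HOL-Analysis.Analysis"
begin

text \<open>Comparison function classes; only the values on the nonnegative reals matter.\<close>

definition class_K :: "(real \<Rightarrow> real) \<Rightarrow> bool" where
  "class_K \<alpha> \<longleftrightarrow> continuous_on {0..} \<alpha> \<and> strict_mono_on {0..} \<alpha> \<and> \<alpha> 0 = 0"

definition class_K_inf :: "(real \<Rightarrow> real) \<Rightarrow> bool" where
  "class_K_inf \<alpha> \<longleftrightarrow> class_K \<alpha> \<and> (\<forall>r. \<exists>s\<ge>0. \<alpha> s > r)"

definition class_KL :: "(real \<Rightarrow> real \<Rightarrow> real) \<Rightarrow> bool" where
  "class_KL \<beta> \<longleftrightarrow>
     (\<forall>t\<ge>0. class_K (\<lambda>s. \<beta> s t)) \<and>
     (\<forall>s>0. (\<forall>t1\<ge>0. \<forall>t2. t1 < t2 \<longrightarrow> \<beta> s t2 < \<beta> s t1) \<and>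
            ((\<lambda>t. \<beta> s t) \<longlongrightarrow> 0) at_top)"

primrec dt_sol :: "('a \<Rightarrow> real \<Rightarrow> 'a) \<Rightarrow> 'a \<Rightarrow> (nat \<Rightarrow> real) \<Rightarrow> nat \<Rightarrow> 'a" where
  "dt_sol F x0 Ts 0 = x0"
| "dt_sol F x0 Ts (Suc k) = F (dt_sol F x0 Ts k) (Ts k)"

definition Phi :: "real \<Rightarrow> (nat \<Rightarrow> real) set" where
  "Phi T = {Ts. \<forall>i. 0 < Ts i \<and> Ts i < T}"

definition EPC :: "(real^'n \<Rightarrow> real \<Rightarrow> real^'n) \<Rightarrow> (real^'n \<Rightarrow> real \<Rightarrow> real^'n) \<Rightarrow> bool" where
  "EPC Fa Fb \<longleftrightarrow> (\<forall>M\<ge>0. \<exists>K>0. \<exists>Tst>0. \<exists>\<rho>. class_K_inf \<rho> \<and>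
      (\<forall>x y T. norm x \<le> M \<longrightarrow> norm y \<le> M \<longrightarrow> 0 < T \<longrightarrow> T < Tst \<longrightarrow>
         norm (Fa x T - Fb y T) \<le> (1 + K * T) * norm (x - y) + T * \<rho> T * max (norm x) (norm y)))"

definition SPS_VSR :: "(real^'n \<Rightarrow> real \<Rightarrow> real^'n) \<Rightarrow> bool" where
  "SPS_VSR F \<longleftrightarrow> (\<exists>\<beta>. class_KL \<beta> \<and>
     (\<forall>M\<ge>0. \<forall>R>0. \<exists>Tst>0. \<forall>k Ts x0. Ts \<in> Phi Tst \<longrightarrow> norm x0 \<le> M \<longrightarrow>
        norm (dt_sol F x0 Ts k) \<le> \<beta> (norm x0) (\<Sum>i<k. Ts i) + R))"

definition LES_VSR :: "(real^'n \<Rightarrow> real \<Rightarrow> real^'n) \<Rightarrow> bool" where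
  "LES_VSR F \<longleftrightarrow> (\<exists>K\<ge>1. \<exists>R>0. \<exists>Tst>0. \<exists>lam>0. \<forall>k Ts x0.
     Ts \<in> Phi Tst \<longrightarrow> norm x0 \<le> R \<longrightarrow>
       norm (dt_sol F x0 Ts k) \<le> K * norm x0 * exp (- lam * (\<Sum>i<k. Ts i)))"

definition SLES_VSR :: "(real^'n \<Rightarrow> real \<Rightarrow> real^'n) \<Rightarrow> bool" where
  "SLES_VSR F \<longleftrightarrow> SPS_VSR F \<and> LES_VSR F"

end

theory Submission
  imports Defs
begin

lemma KL_zero: "class_KL \<beta> \<Longrightarrow> t \<ge> 0 \<Longrightarrow> \<beta> 0 t = 0"
  by (auto simp: class_KL_def class_K_def)

lemma KL_mono_s: "class_KL \<beta> \<Longrightarrow> 0 \<le> s1 \<Longrightarrow> s1 \<le> s2 \<Longrightarrow> t \<ge> 0 \<Longrightarrow> \<beta> s1 t \<le> \<beta> s2 t"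
proof -
  assume a: "class_KL \<beta>" "0 \<le> s1" "s1 \<le> s2" "t \<ge> 0"
  then have "strict_mono_on {0..} (\<lambda>s. \<beta> s t)" by (auto simp: class_KL_def class_K_def)
  then show ?thesis using a
    by (cases "s1 = s2") (auto simp: strict_mono_on_def intro: less_imp_le)
qed

lemma KL_nonneg: "class_KL \<beta> \<Longrightarrow> 0 \<le> s \<Longrightarrow> t \<ge> 0 \<Longrightarrow> \<beta> s t \<ge> 0"
  using KL_mono_s[of \<beta> 0 s t] KL_zero[of \<beta> t] by simp

lemma KL_mono_t: "class_KL \<beta> \<Longrightarrow> 0 \<le> s \<Longrightarrow> 0 \<le> t1 \<Longrightarrow> t1 \<le> t2 \<Longrightarrow> \<beta> s t2 \<le> \<beta> s t1"
proof -
  assume a: "class_KL \<beta>" "0 \<le> s" "0 \<le> t1" "t1 \<le> t2"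
  show ?thesis
  proof (cases "s = 0")
    case True then show ?thesis using a KL_zero[of \<beta>] by simp
  next
    case False
    then have "s > 0" using a by simp
    then show ?thesis using a unfolding class_KL_def
      by (cases "t1 = t2") (auto intro: less_imp_le)
  qed
qed

lemma dt_sol_shift: "dt_sol F x0 Ts (m + j) = dt_sol F (dt_sol F x0 Ts m) (\<lambda>i. Ts (m + i)) j"
  by (induction j) auto

lemma sum_shift: "(\<Sum>i<m + (j::nat). Ts i) = (\<Sum>i<m. Ts i) + (\<Sum>i<j. (Ts (m + i) :: real))"
  by (induction j) auto

lemma sum_nonneg_Ts: "(\<And>i. 0 < Ts i) \<Longrightarrow> 0 \<le> (\<Sum>i<k. (Ts i :: real))"
  by (simp add: less_imp_le sum_nonneg)

lemma window:
  fixes Ts :: "nat \<Rightarrow> real"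
  assumes pos: "\<And>i. 0 < Ts i" and lt: "\<And>i. Ts i < \<tau>"
    and HP: "\<And>m j. good m \<Longrightarrow> (\<Sum>i<j. Ts (m+i)) \<le> 2*\<tau> \<Longrightarrow> P m j"
    and HG: "\<And>m j. good m \<Longrightarrow> \<tau> \<le> (\<Sum>i<j. Ts (m+i)) \<Longrightarrow> (\<Sum>i<j. Ts (m+i)) \<le> 2*\<tau> \<Longrightarrow> good (m+j)"
  shows "good m \<Longrightarrow> \<exists>m'. m \<le> m' \<and> m' \<le> m + d \<and> good m' \<and> P m' (m + d - m') \<and> (\<Sum>i<m + d - m'. Ts (m'+i)) \<le> 2*\<tau>"
proof (induction d arbitrary: m rule: less_induct)
  case (less d)
  show ?case
  proof (cases "(\<Sum>i<d. Ts (m+i)) \<le> 2*\<tau>")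
    case True
    then show ?thesis using HP[OF less.prems] less.prems by (intro exI[of _ m]) auto
  next
    case False
    define j where "j = (LEAST j. \<tau> \<le> (\<Sum>i<j. Ts (m+i)))"
    have ex: "\<tau> \<le> (\<Sum>i<d. Ts (m+i))" using False pos[of 0] lt[of 0] by linarith
    have j1: "\<tau> \<le> (\<Sum>i<j. Ts (m+i))" unfolding j_def by (rule LeastI[of _ d]) (rule ex)
    have jd: "j \<le> d" unfolding j_def by (rule Least_le) (rule ex)
    have j0: "j \<noteq> 0" proof assume "j = 0" then show False using j1 pos[of 0] lt[of 0] by simp qed
    then obtain j' where jj: "j = Suc j'" by (cases j) auto
    have "\<not> \<tau> \<le> (\<Sum>i<j'. Ts (m+i))" unfolding j_def
      using not_less_Least[of j' "\<lambda>j. \<tau> \<le> (\<Sum>i<j. Ts (m+i))"] jj j_def by auto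
    then have j2: "(\<Sum>i<j. Ts (m+i)) \<le> 2*\<tau>" using jj lt[of "m+j'"] by simp
    have g: "good (m+j)" using HG[OF less.prems j1 j2] .
    have jd': "j < d" using jd False j2 by (cases "j = d") auto
    have "d - j < d" using j0 jd by simp
    from less.IH[OF this g] obtain m' where
      "m + j \<le> m'" "m' \<le> m + j + (d - j)" "good m'" "P m' (m + j + (d - j) - m')"
        "(\<Sum>i<m + j + (d - j) - m'. Ts (m'+i)) \<le> 2*\<tau>" by blast
    then show ?thesis using jd by (intro exI[of _ m']) auto
  qed
qed

lemma compare:
  fixes Fa Fb :: "real^'n \<Rightarrow> real \<Rightarrow> real^'n"
  assumes K: "K \<ge> 0" and tau: "\<tau> > 0" and r0: "\<rho>0 \<ge> 0" and B: "B \<ge> 0" and D: "D \<ge> 0"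
    and epc: "\<And>x y T. norm x \<le> B + D \<Longrightarrow> norm y \<le> B + D \<Longrightarrow> 0 < T \<Longrightarrow> T < Te \<Longrightarrow>
        norm (Fa x T - Fb y T) \<le> (1 + K * T) * norm (x - y) + T * \<rho> T * max (norm x) (norm y)"
    and Ts: "\<And>i. 0 < Ts i \<and> Ts i < Te \<and> \<rho> (Ts i) \<le> \<rho>0"
    and bnd: "\<And>k. norm (dt_sol Fb x0 Ts k) \<le> B"
    and small: "\<rho>0 * (B + D) * (2 * \<tau>) * exp (K * (2 * \<tau>)) \<le> D"
  shows "(\<Sum>i<k. Ts i) \<le> 2 * \<tau> \<Longrightarrow> norm (dt_sol Fa x0 Ts k - dt_sol Fb x0 Ts k)
           \<le> \<rho>0 * (B + D) * (\<Sum>i<k. Ts i) * exp (K * (\<Sum>i<k. Ts i))"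
proof (induction k)
  case 0 then show ?case by simp
next
  case (Suc k)
  define t where "t = (\<Sum>i<k. Ts i)"
  define T where "T = Ts k"
  define c where "c = \<rho>0 * (B + D)"
  define e where "e = norm (dt_sol Fa x0 Ts k - dt_sol Fb x0 Ts k)"
  have c0: "c \<ge> 0" using r0 B D by (simp add: c_def)
  have t0: "t \<ge> 0" unfolding t_def using Ts by (simp add: less_imp_le sum_nonneg)
  have T0: "T > 0" "T < Te" "\<rho> T \<le> \<rho>0" using Ts[of k] by (auto simp: T_def)
  have tT: "t + T \<le> 2 * \<tau>" using Suc.prems by (simp add: t_def T_def)
  then have t2: "t \<le> 2 * \<tau>" using T0 by simp
  have IH: "e \<le> c * t * exp (K * t)" using Suc.IH t2 by (simp add: e_def c_def t_def)
  have "c * t * exp (K * t) \<le> c * (2 * \<tau>) * exp (K * (2*\<tau>))"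
    using c0 t0 t2 K by (intro mult_mono) (auto intro: mult_left_mono)
  then have eD: "e \<le> D" using IH small by (simp add: c_def)
  have e0: "e \<ge> 0" by (simp add: e_def)
  have na: "norm (dt_sol Fa x0 Ts k) \<le> B + D"
    using norm_triangle_ineq[of "dt_sol Fa x0 Ts k - dt_sol Fb x0 Ts k" "dt_sol Fb x0 Ts k"] bnd[of k] eD
    by (simp add: e_def)
  have nb: "norm (dt_sol Fb x0 Ts k) \<le> B + D" using bnd[of k] D by simp
  have step: "norm (dt_sol Fa x0 Ts (Suc k) - dt_sol Fb x0 Ts (Suc k))
      \<le> (1 + K * T) * e + T * \<rho> T * max (norm (dt_sol Fa x0 Ts k)) (norm (dt_sol Fb x0 Ts k))"
    using epc[OF na nb T0(1) T0(2)] by (simp add: e_def T_def)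
  have "T * \<rho> T * max (norm (dt_sol Fa x0 Ts k)) (norm (dt_sol Fb x0 Ts k)) \<le> T * \<rho>0 * (B + D)"
  proof -
    have m0: "0 \<le> max (norm (dt_sol Fa x0 Ts k)) (norm (dt_sol Fb x0 Ts k))" by (simp add: le_max_iff_disj)
    have "T * \<rho> T * max (norm (dt_sol Fa x0 Ts k)) (norm (dt_sol Fb x0 Ts k))
        \<le> T * \<rho>0 * max (norm (dt_sol Fa x0 Ts k)) (norm (dt_sol Fb x0 Ts k))"
      using T0 m0 by (intro mult_right_mono mult_left_mono) auto
    also have "\<dots> \<le> T * \<rho>0 * (B + D)"
      using T0 r0 na nb by (intro mult_left_mono) auto
    finally show ?thesis .
  qed
  then have step2: "norm (dt_sol Fa x0 Ts (Suc k) - dt_sol Fb x0 Ts (Suc k)) \<le> (1 + K * T) * e + T * c"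
    using step by (simp add: c_def mult.assoc)
  have "(1 + K * T) * e \<le> exp (K * T) * (c * t * exp (K * t))"
    using IH e0 K T0 by (intro mult_mono) (auto simp: exp_ge_add_one_self)
  also have "\<dots> = c * t * exp (K * (t + T))" by (simp add: distrib_left exp_add)
  finally have a1: "(1 + K * T) * e \<le> c * t * exp (K * (t + T))" .
  have "1 \<le> exp (K * (t + T))" using K t0 T0 by simp
  moreover have "T * c \<ge> 0" using T0 c0 by simp
  ultimately have "T * c * 1 \<le> T * c * exp (K * (t + T))" by (intro mult_left_mono) auto
  then have "T * c \<le> T * c * exp (K * (t + T))" by simp
  then have "(1 + K * T) * e + T * c \<le> c * (t + T) * exp (K * (t + T))"
    using a1 by (simp add: algebra_simps)
  then show ?case using step2 by (simp add: t_def T_def c_def)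
qed


lemma EPC_sym: "EPC Fa Fb \<Longrightarrow> EPC Fb Fa"
  unfolding EPC_def
  apply (intro allI impI)
  subgoal for M
    apply (drule spec[of _ M], drule mp, assumption)
    apply (elim exE conjE)
    subgoal for K Tst \<rho>
      apply (rule exI[of _ K], simp)
      apply (rule exI[of _ Tst], simp)
      apply (rule exI[of _ \<rho>], simp)
      apply (intro allI impI)
      subgoal for x y T
        using spec[of _ y, THEN spec[of _ x], THEN spec[of _ T]]
        by (metis norm_minus_commute max.commute)
      done
    done
  done

lemma classK_small:
  assumes "class_K \<alpha>" "\<epsilon> > 0"
  shows "\<exists>\<delta>>0. \<forall>s. 0 \<le> s \<longrightarrow> s < \<delta> \<longrightarrow> \<alpha> s < \<epsilon>"
proof -
  have c: "continuous_on {0..} \<alpha>" and z: "\<alpha> 0 = 0" using assms(1) by (auto simp: class_K_def)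
  from c[unfolded continuous_on_iff] assms(2) obtain d where
    "d > 0" "\<forall>x'\<in>{0..}. dist x' 0 < d \<longrightarrow> dist (\<alpha> x') (\<alpha> 0) < \<epsilon>"
    by (meson atLeast_iff order_refl)
  then show ?thesis using z by (intro exI[of _ d]) (auto simp: dist_real_def)
qed


lemma SPS_transfer:
  fixes Fa Fb :: "real^'n \<Rightarrow> real \<Rightarrow> real^'n"
  assumes epc: "EPC Fa Fb" and sps: "SPS_VSR Fb"
  shows "SPS_VSR Fa"
proof -
  obtain \<beta> where KL: "class_KL \<beta>" and Hb: "\<forall>M\<ge>0. \<forall>R>0. \<exists>Tst>0. \<forall>k Ts x0. Ts \<in> Phi Tst \<longrightarrow> norm x0 \<le> M \<longrightarrow>
        norm (dt_sol Fb x0 Ts k) \<le> \<beta> (norm x0) (\<Sum>i<k. Ts i) + R"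
    using sps unfolding SPS_VSR_def by blast
  have "\<forall>M\<ge>0. \<forall>R>0. \<exists>Tst>0. \<forall>k Ts x0. Ts \<in> Phi Tst \<longrightarrow> norm x0 \<le> M \<longrightarrow>
        norm (dt_sol Fa x0 Ts k) \<le> \<beta> (norm x0) (\<Sum>i<k. Ts i) + R"
  proof (intro allI impI)
    fix M R :: real assume M: "M \<ge> 0" and R: "R > 0"
    have cK0: "class_K (\<lambda>s. \<beta> s 0)" using KL by (simp add: class_KL_def)
    obtain \<delta>1 where d1: "\<delta>1 > 0" "\<forall>s. 0 \<le> s \<longrightarrow> s < \<delta>1 \<longrightarrow> \<beta> s 0 < R/2"
      using classK_small[OF cK0, of "R/2"] R by auto
    define \<eta> where "\<eta> = min (\<delta>1/4) (R/4)"
    have eta: "\<eta> > 0" "3*\<eta> < \<delta>1" "2*\<eta> \<le> R/2" using d1 R by (auto simp: \<eta>_def)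
    define R0 where "R0 = 3*\<eta>"
    have "\<beta> (3*\<eta>) 0 < R/2" using d1(2) eta by (meson less_imp_le mult_pos_pos zero_less_numeral)
    then have R0: "R0 \<ge> 0" "\<beta> R0 0 + 2*\<eta> \<le> R" using eta by (auto simp: R0_def)
    define S where "S = max M R0"
    have S: "S > 0" "M \<le> S" "R0 \<le> S" using eta by (auto simp: S_def R0_def)
    have "((\<lambda>t. \<beta> S t) \<longlongrightarrow> 0) at_top" using KL S by (simp add: class_KL_def)
    then have "eventually (\<lambda>t. dist (\<beta> S t) 0 < \<eta>) at_top" using eta by (simp add: tendsto_iff)
    then obtain \<tau>0 where t0: "\<And>t. t \<ge> \<tau>0 \<Longrightarrow> dist (\<beta> S t) 0 < \<eta>"
      by (auto simp: eventually_at_top_linorder)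
    define \<tau> where "\<tau> = max \<tau>0 1"
    have tau: "\<tau> > 0" "\<beta> S \<tau> \<le> \<eta>" using t0[of \<tau>] by (auto simp: \<tau>_def dist_real_def)
    obtain Tb where Tb: "Tb > 0" "\<forall>k Ts x0. Ts \<in> Phi Tb \<longrightarrow> norm x0 \<le> S \<longrightarrow>
        norm (dt_sol Fb x0 Ts k) \<le> \<beta> (norm x0) (\<Sum>i<k. Ts i) + \<eta>"
      using Hb S eta by (meson less_imp_le)
    define B where "B = \<beta> S 0 + \<eta>"
    have B: "B \<ge> 0" using KL_nonneg[OF KL, of S 0] S eta by (simp add: B_def)
    obtain K Te \<rho> where KT: "K > 0" "Te > 0" "class_K_inf \<rho>" and
      ep: "\<forall>x y T. norm x \<le> B + 1 \<longrightarrow> norm y \<le> B + 1 \<longrightarrow> 0 < T \<longrightarrow> T < Te \<longrightarrow>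
         norm (Fa x T - Fb y T) \<le> (1 + K * T) * norm (x - y) + T * \<rho> T * max (norm x) (norm y)"
      using epc B unfolding EPC_def by (metis add_nonneg_pos zero_less_one less_imp_le)
    define \<rho>0 where "\<rho>0 = min \<eta> 1 / ((B + 1) * (2 * \<tau>) * exp (K * (2 * \<tau>)))"
    have den: "(B + 1) * (2 * \<tau>) * exp (K * (2 * \<tau>)) > 0" using B tau by simp
    have r0: "\<rho>0 > 0" using den eta by (simp add: \<rho>0_def)
    have r0eq: "\<rho>0 * (B + 1) * (2 * \<tau>) * exp (K * (2 * \<tau>)) = min \<eta> 1"
      using den tau B by (simp add: \<rho>0_def)
    obtain \<delta> where dl: "\<delta> > 0" "\<forall>T. 0 \<le> T \<longrightarrow> T < \<delta> \<longrightarrow> \<rho> T < \<rho>0"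
      using classK_small[of \<rho> \<rho>0] KT r0 by (auto simp: class_K_inf_def)
    define Tst where "Tst = min (min Tb Te) (min \<tau> \<delta>)"
    have Tst: "Tst > 0" using Tb KT tau dl by (simp add: Tst_def)
    show "\<exists>Tst>0. \<forall>k Ts x0. Ts \<in> Phi Tst \<longrightarrow> norm x0 \<le> M \<longrightarrow>
        norm (dt_sol Fa x0 Ts k) \<le> \<beta> (norm x0) (\<Sum>i<k. Ts i) + R"
    proof (intro exI[of _ Tst] conjI allI impI Tst)
      fix k :: nat and Ts and x0 :: "real^'n" assume Ts: "Ts \<in> Phi Tst" and x0: "norm x0 \<le> M"
      have pos: "\<And>i. 0 < Ts i" and lt: "\<And>i. Ts i < Tst" using Ts by (auto simp: Phi_def)
      have ltt: "\<And>i. Ts i < \<tau>" using lt by (metis Tst_def min_less_iff_conj)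
      define xa where "xa = (\<lambda>k. dt_sol Fa x0 Ts k)"
      define good where "good = (\<lambda>m. m = 0 \<or> norm (xa m) \<le> R0)"
      define P where "P = (\<lambda>m j. norm (xa (m+j)) \<le> \<beta> (norm (xa m)) (\<Sum>i<j. Ts (m+i)) + 2*\<eta>)"
      have gS: "\<And>m. good m \<Longrightarrow> norm (xa m) \<le> S" using x0 S by (auto simp: good_def xa_def)
      have HP: "P m j" if gm: "good m" and sj: "(\<Sum>i<j. Ts (m+i)) \<le> 2*\<tau>" for m j
      proof -
        define Ts' where "Ts' = (\<lambda>i. Ts (m+i))"
        have Ts'P: "Ts' \<in> Phi Tb" using pos lt by (auto simp: Phi_def Ts'_def Tst_def)
        have s0: "\<And>j. 0 \<le> (\<Sum>i<j. Ts' i)" using pos by (simp add: Ts'_def less_imp_le sum_nonneg)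
        have bb: "norm (dt_sol Fb (xa m) Ts' j) \<le> \<beta> (norm (xa m)) (\<Sum>i<j. Ts' i) + \<eta>" for j
          using Tb(2) Ts'P gS[OF gm] by blast
        have bnd: "norm (dt_sol Fb (xa m) Ts' j) \<le> B" for j
        proof -
          have "\<beta> (norm (xa m)) (\<Sum>i<j. Ts' i) \<le> \<beta> S (\<Sum>i<j. Ts' i)"
            using KL_mono_s[OF KL _ gS[OF gm] s0] by simp
          also have "\<dots> \<le> \<beta> S 0" using KL_mono_t[OF KL _ _ s0] S by simp
          finally show ?thesis using bb[of j] by (simp add: B_def)
        qed
        have cmp: "norm (dt_sol Fa (xa m) Ts' j - dt_sol Fb (xa m) Ts' j)
            \<le> \<rho>0 * (B + 1) * (\<Sum>i<j. Ts' i) * exp (K * (\<Sum>i<j. Ts' i))"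
          apply (rule compare[where \<tau>=\<tau> and Te=Te and \<rho>=\<rho> and D=1])
          using KT tau r0 B ep bnd sj r0eq pos lt dl
          by (auto simp: Ts'_def Tst_def less_imp_le)
        have "\<rho>0 * (B + 1) * (\<Sum>i<j. Ts' i) * exp (K * (\<Sum>i<j. Ts' i))
            \<le> \<rho>0 * (B + 1) * (2 * \<tau>) * exp (K * (2 * \<tau>))"
          using r0 B s0[of j] sj KT
          by (intro mult_mono) (auto simp: Ts'_def intro!: mult_left_mono)
        then have err: "norm (dt_sol Fa (xa m) Ts' j - dt_sol Fb (xa m) Ts' j) \<le> \<eta>"
          using cmp r0eq by linarith
        have eqa: "dt_sol Fa (xa m) Ts' j = xa (m+j)" by (simp add: xa_def Ts'_def dt_sol_shift)
        have "norm (xa (m+j)) \<le> norm (dt_sol Fb (xa m) Ts' j) + \<eta>"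
          using norm_triangle_ineq[of "dt_sol Fa (xa m) Ts' j - dt_sol Fb (xa m) Ts' j" "dt_sol Fb (xa m) Ts' j"] err eqa
          by simp
        then show ?thesis using bb[of j] by (simp add: P_def Ts'_def)
      qed
      have HG: "good (m+j)" if gm: "good m" and s1: "\<tau> \<le> (\<Sum>i<j. Ts (m+i))" and s2: "(\<Sum>i<j. Ts (m+i)) \<le> 2*\<tau>" for m j
      proof -
        have "norm (xa (m+j)) \<le> \<beta> (norm (xa m)) (\<Sum>i<j. Ts (m+i)) + 2*\<eta>"
          using HP[OF gm s2] by (simp add: P_def)
        also have "\<beta> (norm (xa m)) (\<Sum>i<j. Ts (m+i)) \<le> \<beta> S (\<Sum>i<j. Ts (m+i))"
          using KL_mono_s[OF KL _ gS[OF gm]] s1 tau by simp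
        also have "\<beta> S (\<Sum>i<j. Ts (m+i)) \<le> \<beta> S \<tau>" using KL_mono_t[OF KL _ _ s1] S tau by simp
        finally show ?thesis using tau by (simp add: good_def R0_def)
      qed
      have g0: "good 0" by (simp add: good_def)
      obtain m' where m': "m' \<le> k" "good m'" "P m' (k - m')" "(\<Sum>i<k - m'. Ts (m'+i)) \<le> 2*\<tau>"
        using window[of Ts \<tau> good P 0 k, OF pos ltt HP HG g0] by auto
      define s where "s = (\<Sum>i<k - m'. Ts (m'+i))"
      have s0: "s \<ge> 0" using pos by (simp add: s_def less_imp_le sum_nonneg)
      have tk0: "(\<Sum>i<k. Ts i) \<ge> 0" using pos by (simp add: less_imp_le sum_nonneg)
      have xk: "norm (xa k) \<le> \<beta> (norm (xa m')) s + 2*\<eta>" using m' by (simp add: P_def s_def)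
      show "norm (dt_sol Fa x0 Ts k) \<le> \<beta> (norm x0) (\<Sum>i<k. Ts i) + R"
      proof (cases "m' = 0")
        case True
        then show ?thesis using xk eta by (simp add: xa_def s_def)
      next
        case False
        then have "norm (xa m') \<le> R0" using m' by (simp add: good_def)
        then have "\<beta> (norm (xa m')) s \<le> \<beta> R0 s" using KL_mono_s[OF KL _ _ s0] by simp
        also have "\<dots> \<le> \<beta> R0 0" using KL_mono_t[OF KL R0(1) _ s0] by simp
        finally have "norm (xa k) \<le> R" using xk R0 by simp
        moreover have "\<beta> (norm x0) (\<Sum>i<k. Ts i) \<ge> 0" using KL_nonneg[OF KL _ tk0] by simp
        ultimately show ?thesis by (simp add: xa_def)
      qed
    qed
  qed
  then show ?thesis using KL unfolding SPS_VSR_def by blast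
qed


lemma LES_transfer:
  fixes Fa Fb :: "real^'n \<Rightarrow> real \<Rightarrow> real^'n"
  assumes epc: "EPC Fa Fb" and les: "LES_VSR Fb"
  shows "LES_VSR Fa"
proof -
  obtain Kb Rb Tb lam where Kb: "Kb \<ge> 1" and Rb: "Rb > 0" and Tb: "Tb > 0" and lam: "lam > 0"
    and Hb: "\<forall>k Ts x0. Ts \<in> Phi Tb \<longrightarrow> norm x0 \<le> Rb \<longrightarrow>
       norm (dt_sol Fb x0 Ts k) \<le> Kb * norm x0 * exp (- lam * (\<Sum>i<k. Ts i))"
    using les unfolding LES_VSR_def by blast
  define \<tau> where "\<tau> = max 1 (ln (4*Kb) / lam)"
  have tau: "\<tau> > 0" by (simp add: \<tau>_def)
  have "ln (4*Kb) / lam \<le> \<tau>" by (simp add: \<tau>_def)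
  then have "ln (4*Kb) \<le> lam * \<tau>" using lam by (simp add: field_simps)
  then have "exp (ln (4*Kb)) \<le> exp (lam * \<tau>)" by simp
  then have "4 * Kb \<le> exp (lam * \<tau>)" using Kb by simp
  then have dec: "Kb * exp (- lam * \<tau>) \<le> 1/4"
    by (simp add: exp_minus field_simps)
  define Mb where "Mb = (Kb + 1) * Rb"
  have Mb: "Mb \<ge> 0" using Kb Rb by (simp add: Mb_def)
  obtain K Te \<rho> where KT: "K > 0" "Te > 0" "class_K_inf \<rho>" and
    ep: "\<forall>x y T. norm x \<le> Mb \<longrightarrow> norm y \<le> Mb \<longrightarrow> 0 < T \<longrightarrow> T < Te \<longrightarrow>
       norm (Fa x T - Fb y T) \<le> (1 + K * T) * norm (x - y) + T * \<rho> T * max (norm x) (norm y)"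
    using epc Mb unfolding EPC_def by metis
  define den where "den = (Kb + 1) * (2 * \<tau>) * exp (K * (2 * \<tau>))"
  have den: "den > 0" using Kb tau by (simp add: den_def)
  define \<rho>0 where "\<rho>0 = 1 / (4 * den)"
  have r0: "\<rho>0 > 0" using den by (simp add: \<rho>0_def)
  have r0eq: "\<rho>0 * (Kb + 1) * (2 * \<tau>) * exp (K * (2 * \<tau>)) = 1/4"
    using den tau Kb by (simp add: \<rho>0_def den_def)
  obtain \<delta> where dl: "\<delta> > 0" "\<forall>T. 0 \<le> T \<longrightarrow> T < \<delta> \<longrightarrow> \<rho> T < \<rho>0"
    using classK_small[of \<rho> \<rho>0] KT r0 by (auto simp: class_K_inf_def)
  define Tst where "Tst = min (min Tb Te) (min \<tau> \<delta>)"
  have Tst: "Tst > 0" using Tb KT tau dl by (simp add: Tst_def)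
  define lam' where "lam' = ln 2 / (2 * \<tau>)"
  have lam': "lam' > 0" "exp (lam' * (2 * \<tau>)) = 2" using tau by (auto simp: lam'_def)
  have main: "norm (dt_sol Fa x0 Ts k) \<le> (2 * (Kb + 1)) * norm x0 * exp (- lam' * (\<Sum>i<k. Ts i))"
    if Ts: "Ts \<in> Phi Tst" and x0: "norm x0 \<le> Rb" for k :: nat and Ts and x0 :: "real^'n"
  proof -
    have pos: "\<And>i. 0 < Ts i" and lt: "\<And>i. Ts i < Tst" using Ts by (auto simp: Phi_def)
    have ltt: "\<And>i. Ts i < \<tau>" using lt by (metis Tst_def min_less_iff_conj)
    have tnn: "\<And>m. 0 \<le> (\<Sum>i<m. Ts i)" using pos by (simp add: less_imp_le sum_nonneg)
    define xa where "xa = (\<lambda>k. dt_sol Fa x0 Ts k)"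
    define good where "good = (\<lambda>m. norm (xa m) \<le> norm x0 * exp (- lam' * (\<Sum>i<m. Ts i)))"
    define P where "P = (\<lambda>m j. norm (xa (m+j)) \<le> Kb * norm (xa m) * exp (- lam * (\<Sum>i<j. Ts (m+i))) + norm (xa m) / 4)"
    have gR: "norm (xa m) \<le> Rb" if "good m" for m
    proof -
      have "exp (- lam' * (\<Sum>i<m. Ts i)) \<le> 1" using lam' tnn[of m] by simp
      then have "norm x0 * exp (- lam' * (\<Sum>i<m. Ts i)) \<le> norm x0 * 1"
        by (intro mult_left_mono) auto
      then show ?thesis using that x0 by (simp add: good_def)
    qed
    have HP: "P m j" if gm: "good m" and sj: "(\<Sum>i<j. Ts (m+i)) \<le> 2*\<tau>" for m j
    proof -
      define Ts' where "Ts' = (\<lambda>i. Ts (m+i))"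
      define n where "n = norm (xa m)"
      have n0: "n \<ge> 0" by (simp add: n_def)
      have Ts'P: "Ts' \<in> Phi Tb" using pos lt by (auto simp: Phi_def Ts'_def Tst_def)
      have s0: "\<And>j. 0 \<le> (\<Sum>i<j. Ts' i)" using pos by (simp add: Ts'_def less_imp_le sum_nonneg)
      have bb: "norm (dt_sol Fb (xa m) Ts' j) \<le> Kb * n * exp (- lam * (\<Sum>i<j. Ts' i))" for j
        using Hb Ts'P gR[OF gm] by (simp add: n_def)
      have bnd: "norm (dt_sol Fb (xa m) Ts' j) \<le> Kb * n" for j
      proof -
        have "exp (- lam * (\<Sum>i<j. Ts' i)) \<le> 1" using lam s0[of j] by simp
        then have "Kb * n * exp (- lam * (\<Sum>i<j. Ts' i)) \<le> Kb * n * 1"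
          using Kb n0 by (intro mult_left_mono) auto
        then show ?thesis using bb[of j] by simp
      qed
      have nR: "Kb * n + n \<le> Mb" unfolding Mb_def n_def
      proof -
        have "Kb * norm (xa m) \<le> Kb * Rb" using gR[OF gm] Kb by (intro mult_left_mono) auto
        then show "Kb * norm (xa m) + norm (xa m) \<le> (Kb + 1) * Rb" using gR[OF gm] by (simp add: distrib_right)
      qed
      have cmp: "norm (dt_sol Fa (xa m) Ts' j - dt_sol Fb (xa m) Ts' j)
          \<le> \<rho>0 * (Kb * n + n) * (\<Sum>i<j. Ts' i) * exp (K * (\<Sum>i<j. Ts' i))"
      proof (rule compare[where \<tau>=\<tau> and Te=Te and \<rho>=\<rho> and D=n and B="Kb*n"])
        show "\<rho>0 * (Kb * n + n) * (2 * \<tau>) * exp (K * (2 * \<tau>)) \<le> n"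
        proof -
          have "\<rho>0 * (Kb * n + n) * (2 * \<tau>) * exp (K * (2 * \<tau>))
              = n * (\<rho>0 * (Kb + 1) * (2 * \<tau>) * exp (K * (2 * \<tau>)))" by (simp add: algebra_simps)
          also have "\<dots> = n / 4" using r0eq by simp
          finally show ?thesis using n0 by simp
        qed
      qed (use KT tau r0 Kb n0 ep nR bnd sj pos lt dl in \<open>auto simp: Ts'_def Tst_def less_imp_le\<close>)
      have "\<rho>0 * (Kb * n + n) * (\<Sum>i<j. Ts' i) * exp (K * (\<Sum>i<j. Ts' i))
          \<le> \<rho>0 * (Kb * n + n) * (2 * \<tau>) * exp (K * (2 * \<tau>))"
        using r0 Kb n0 s0[of j] sj KT
        by (intro mult_mono) (auto simp: Ts'_def intro!: mult_left_mono)
      also have "\<dots> = n / 4"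
      proof -
        have "\<rho>0 * (Kb * n + n) * (2 * \<tau>) * exp (K * (2 * \<tau>))
            = n * (\<rho>0 * (Kb + 1) * (2 * \<tau>) * exp (K * (2 * \<tau>)))" by (simp add: algebra_simps)
        also have "\<dots> = n / 4" using r0eq by simp
        finally show ?thesis .
      qed
      finally have err: "norm (dt_sol Fa (xa m) Ts' j - dt_sol Fb (xa m) Ts' j) \<le> n / 4"
        using cmp by linarith
      have eqa: "dt_sol Fa (xa m) Ts' j = xa (m+j)" by (simp add: xa_def Ts'_def dt_sol_shift)
      have "norm (xa (m+j)) \<le> norm (dt_sol Fb (xa m) Ts' j) + n / 4"
        using norm_triangle_ineq[of "dt_sol Fa (xa m) Ts' j - dt_sol Fb (xa m) Ts' j" "dt_sol Fb (xa m) Ts' j"] err eqa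
        by simp
      then show ?thesis using bb[of j] by (simp add: P_def Ts'_def n_def)
    qed
    have HG: "good (m+j)" if gm: "good m" and s1: "\<tau> \<le> (\<Sum>i<j. Ts (m+i))" and s2: "(\<Sum>i<j. Ts (m+i)) \<le> 2*\<tau>" for m j
    proof -
      define s where "s = (\<Sum>i<j. Ts (m+i))"
      define n where "n = norm (xa m)"
      define E where "E = norm x0 * exp (- lam' * (\<Sum>i<m. Ts i))"
      have n0: "n \<ge> 0" by (simp add: n_def)
      have nE: "n \<le> E" using gm by (simp add: good_def n_def E_def)
      have "norm (xa (m+j)) \<le> Kb * n * exp (- lam * s) + n / 4"
        using HP[OF gm s2] by (simp add: P_def s_def n_def)
      also have "Kb * n * exp (- lam * s) \<le> n * (Kb * exp (- lam * \<tau>))"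
      proof -
        have "exp (- lam * s) \<le> exp (- lam * \<tau>)" using lam s1 by (simp add: s_def)
        then have "(Kb * n) * exp (- lam * s) \<le> (Kb * n) * exp (- lam * \<tau>)"
          using Kb n0 by (intro mult_left_mono) auto
        then show ?thesis by (simp add: algebra_simps)
      qed
      also have "n * (Kb * exp (- lam * \<tau>)) \<le> n * (1/4)" using dec n0 by (intro mult_left_mono)
      finally have a: "norm (xa (m+j)) \<le> E / 2" using nE by simp
      have "exp (lam' * s) \<le> exp (lam' * (2*\<tau>))" using lam'(1) s2 by (simp add: s_def)
      then have es: "exp (lam' * s) \<le> 2" using lam' by simp
      have E0: "E \<ge> 0" by (simp add: E_def)
      have "E / 2 \<le> E / exp (lam' * s)" using es E0 by (intro divide_left_mono) auto
      also have "\<dots> = norm x0 * exp (- lam' * (\<Sum>i<m+j. Ts i))"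
      proof -
        have ts: "(\<Sum>i<m+j. Ts i) = (\<Sum>i<m. Ts i) + s" by (simp only: sum_shift s_def)
        have "exp (- lam' * (\<Sum>i<m+j. Ts i)) = exp (- lam' * (\<Sum>i<m. Ts i)) / exp (lam' * s)"
          unfolding ts
        proof -
          have "- lam' * ((\<Sum>i<m. Ts i) + s) = - lam' * (\<Sum>i<m. Ts i) - lam' * s" by (simp add: algebra_simps)
          then show "exp (- lam' * ((\<Sum>i<m. Ts i) + s)) = exp (- lam' * (\<Sum>i<m. Ts i)) / exp (lam' * s)"
            by (simp only: exp_diff)
        qed
        then show ?thesis by (simp add: E_def)
      qed
      finally show ?thesis using a by (simp add: good_def)
    qed
    have g0: "good 0" by (simp add: good_def xa_def)
    obtain m' where m': "m' \<le> k" "good m'" "P m' (k - m')" "(\<Sum>i<k - m'. Ts (m'+i)) \<le> 2*\<tau>"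
      using window[of Ts \<tau> good P 0 k, OF pos ltt HP HG g0] by auto
    define s where "s = (\<Sum>i<k - m'. Ts (m'+i))"
    define n where "n = norm (xa m')"
    have n0: "n \<ge> 0" by (simp add: n_def)
    have s0: "s \<ge> 0" using pos by (simp add: s_def less_imp_le sum_nonneg)
    have tk: "(\<Sum>i<k. Ts i) = (\<Sum>i<m'. Ts i) + s"
      using sum_shift[of Ts m' "k - m'"] m'(1) by (simp add: s_def)
    have sle: "s \<le> 2 * \<tau>" using m'(4) by (simp add: s_def)
    have xk: "norm (xa k) \<le> Kb * n * exp (- lam * s) + n / 4" using m' by (simp add: P_def s_def n_def)
    have "Kb * n * exp (- lam * s) \<le> Kb * n * 1"
      using Kb n0 lam s0 by (intro mult_left_mono) auto
    then have xk2: "norm (xa k) \<le> (Kb + 1) * n" using xk n0 by (simp add: algebra_simps)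
    define E where "E = exp (- lam' * (\<Sum>i<m'. Ts i))"
    have nE: "n \<le> norm x0 * E" using m'(2) by (simp add: good_def n_def E_def)
    have "exp (lam' * s) \<le> exp (lam' * (2*\<tau>))" using lam'(1) sle by simp
    then have es: "exp (lam' * s) \<le> 2" using lam' by simp
    have Eeq: "E = exp (- lam' * (\<Sum>i<k. Ts i)) * exp (lam' * s)"
      by (simp add: E_def tk algebra_simps flip: exp_add)
    have "E \<le> exp (- lam' * (\<Sum>i<k. Ts i)) * 2" unfolding Eeq by (intro mult_left_mono es) simp
    then have "norm x0 * E \<le> norm x0 * (exp (- lam' * (\<Sum>i<k. Ts i)) * 2)" by (intro mult_left_mono) auto
    then have "(Kb + 1) * n \<le> (Kb + 1) * (norm x0 * (exp (- lam' * (\<Sum>i<k. Ts i)) * 2))"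
      using nE Kb by (intro mult_left_mono) auto
    then show ?thesis using xk2 by (simp add: xa_def algebra_simps)
  qed
  show ?thesis unfolding LES_VSR_def
    apply (rule exI[of _ "2 * (Kb + 1)"])
    apply (rule conjI) using Kb apply simp
    apply (rule exI[of _ Rb], rule conjI, rule Rb)
    apply (rule exI[of _ Tst], rule conjI, rule Tst)
    apply (rule exI[of _ lam'], rule conjI, rule lam'(1))
    using main by blast
qed


theorem theorem1:
  fixes Fa Fb :: "real^'n \<Rightarrow> real \<Rightarrow> real^'n"
  assumes "EPC Fa Fb"
  shows "(SPS_VSR Fa \<longleftrightarrow> SPS_VSR Fb) \<and> (LES_VSR Fa \<longleftrightarrow> LES_VSR Fb)
         \<and> (SLES_VSR Fa \<longleftrightarrow> SLES_VSR Fb)"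
proof -
  have s: "EPC Fb Fa" using EPC_sym[OF assms] .
  have 1: "SPS_VSR Fa \<longleftrightarrow> SPS_VSR Fb" using SPS_transfer[OF assms] SPS_transfer[OF s] by blast
  have 2: "LES_VSR Fa \<longleftrightarrow> LES_VSR Fb" using LES_transfer[OF assms] LES_transfer[OF s] by blast
  show ?thesis using 1 2 by (simp add: SLES_VSR_def)
qed

end
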